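(* In the message-efficient $KT_0$ \textsc{SetCover} algorithm, until phase $\log(\Delta)/2$ the nodes send at most $\tilde{O}(n\sqrt{\Delta})$ messages with high probability.
   Context: Setting: a \textsc{SetCover} instance with $n$ elements, modeled as a bipartite communication graph with an edge between each set and each element it contains. $\Delta$ is the maximum degree, and the model is $KT_0$-\textsc{Congest}. Algorithm, phases $i=0,1,\dots$: - Set wake-up: each set draws $X_s$ with $\Pr[X_s\ge t]=2^{-t}$, capped at the phase length $4\log\Delta$. It waits $4\log\Delta-X_s$ rounds and then wakes up for one round. - Element messages: in each round, each uncovered element sends a message to $c\cdot8\log(n)\cdot 2^i/\Delta$ neighbors chosen uniformly at random, where $c>0$ is a constant. - Joining: a waking set that receives at least $c\cdot4\log(n)$ such messages joins the solution and notifies its elements (at most $\Delta$ messages), which become covered. $\tilde{O}$ hides polylogarithmic factors. "With high probability" means with probability at least $1-n^{-c}$. *)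

theory Defs
  imports "HOL-Probability.Probability"
begin

text \<open>A SetCover instance: finite set of sets S, each s covering elems s (a subset of
  the finite universe U). Communication graph: bipartite, set s adjacent to the elements
  of elems s.\<close>

definition nbrs :: "'s set \<Rightarrow> ('s \<Rightarrow> 'e set) \<Rightarrow> 'e \<Rightarrow> 's set" where
  "nbrs S elems e = {s \<in> S. e \<in> elems s}"

definition maxdeg :: "'s set \<Rightarrow> ('s \<Rightarrow> 'e set) \<Rightarrow> 'e set \<Rightarrow> nat" where
  "maxdeg S elems U =
     Max ((\<lambda>s. card (elems s)) ` S \<union> (\<lambda>e. card (nbrs S elems e)) ` U)"

definition phase_len :: "nat \<Rightarrow> nat" where
  "phase_len D = nat \<lceil>4 * log 2 (real D)\<rceil>"

text \<open>X with Pr[X >= t] = 2^(-t), capped at L.\<close>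
definition capped_geom :: "nat \<Rightarrow> nat pmf" where
  "capped_geom L = map_pmf (\<lambda>g. min g L) (geometric_pmf (1/2))"

definition msg_count :: "real \<Rightarrow> nat \<Rightarrow> nat \<Rightarrow> nat \<Rightarrow> real" where
  "msg_count c n D i = c * 8 * log 2 (real n) * 2 ^ i / real D"

text \<open>Sending to k neighbours chosen uniformly at random among the neighbours N
  (k possibly fractional: randomized rounding of k, then a uniformly random set of
  that many distinct neighbours; all neighbours if k exceeds the degree).\<close>
definition choose_targets :: "'s set \<Rightarrow> real \<Rightarrow> 's set pmf" where
  "choose_targets N k =
     bind_pmf (bernoulli_pmf (frac k)) (\<lambda>b.
       (let m = min (nat \<lfloor>k\<rfloor> + (if b then 1 else 0)) (card N)
        in pmf_of_set {T. T \<subseteq> N \<and> card T = m}))"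

text \<open>State: (covered elements, messages sent so far).
  w s is the round (within the phase) in which set s is awake.\<close>
definition round_step ::
  "'s set \<Rightarrow> ('s \<Rightarrow> 'e set) \<Rightarrow> 'e set \<Rightarrow> real \<Rightarrow> nat \<Rightarrow> ('s \<Rightarrow> nat) \<Rightarrow> nat
     \<Rightarrow> 'e set \<times> nat \<Rightarrow> ('e set \<times> nat) pmf" where
  "round_step S elems U c i w r st =
     (let n = card U; D = maxdeg S elems U; senders = U - fst st in
      bind_pmf (Pi_pmf senders {} (\<lambda>e. choose_targets (nbrs S elems e) (msg_count c n D i)))
        (\<lambda>T. let J = {s \<in> S. w s = r \<and>
                         real (card {e \<in> senders. s \<in> T e}) \<ge> c * 4 * log 2 (real n)}
             in return_pmf (fst st \<union> \<Union>(elems ` J),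
                            snd st + (\<Sum>e\<in>senders. card (T e)) + (\<Sum>s\<in>J. card (elems s)))))"

fun iterate_pmf :: "nat \<Rightarrow> (nat \<Rightarrow> 'a \<Rightarrow> 'a pmf) \<Rightarrow> 'a \<Rightarrow> 'a pmf" where
  "iterate_pmf 0 f x = return_pmf x"
| "iterate_pmf (Suc k) f x = bind_pmf (iterate_pmf k f x) (f k)"

definition phase_step ::
  "'s set \<Rightarrow> ('s \<Rightarrow> 'e set) \<Rightarrow> 'e set \<Rightarrow> real \<Rightarrow> nat \<Rightarrow> 'e set \<times> nat \<Rightarrow> ('e set \<times> nat) pmf" where
  "phase_step S elems U c i st =
     (let L = phase_len (maxdeg S elems U) in
      bind_pmf (Pi_pmf S 0 (\<lambda>_. capped_geom L))
        (\<lambda>X. iterate_pmf (Suc L) (\<lambda>r. round_step S elems U c i (\<lambda>s. L - X s) r) st))"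

definition run_until_half ::
  "'s set \<Rightarrow> ('s \<Rightarrow> 'e set) \<Rightarrow> 'e set \<Rightarrow> real \<Rightarrow> ('e set \<times> nat) pmf" where
  "run_until_half S elems U c =
     iterate_pmf (Suc (nat \<lfloor>log 2 (real (maxdeg S elems U)) / 2\<rfloor>))
       (phase_step S elems U c) ({}, 0)"

end

theory Submission imports Defs begin

lemma Sm_props:
  assumes "finite N" "m \<le> card N"
  shows "finite {T. T \<subseteq> N \<and> card T = m}" "{T. T \<subseteq> N \<and> card T = m} \<noteq> {}"
proof -
  show "finite {T. T \<subseteq> N \<and> card T = m}"
    using assms(1) by (rule finite_subset[rotated, OF finite_Pow_iff[THEN iffD2]]) auto
  obtain T where "T \<subseteq> N" "card T = m" using obtain_subset_with_card_n[OF assms(2)] by metis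
  then show "{T. T \<subseteq> N \<and> card T = m} \<noteq> {}" by auto
qed

lemma ct_set:
  assumes "finite N"
  shows "set_pmf (choose_targets N k) \<subseteq> Pow N"
proof -
  have *: "T \<subseteq> N" if "T \<in> set_pmf (pmf_of_set {T. T \<subseteq> N \<and> card T = min a (card N)})" for a T
    using that Sm_props[OF assms, of "min a (card N)"] by (subst (asm) set_pmf_of_set) auto
  show ?thesis
    unfolding choose_targets_def Let_def set_bind_pmf using * by blast
qed

lemma ct_exp:
  assumes "finite N" "0 \<le> k"
  shows "measure_pmf.expectation (choose_targets N k) (\<lambda>T. (2::real) ^ card T) \<le> 4 powr k"
proof -
  define p where "p = frac k"
  define f where "f = nat \<lfloor>k\<rfloor>"
  have p01: "0 \<le> p" "p \<le> 1" unfolding p_def using frac_lt_1[of k] frac_ge_0[of k] by auto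
  have kf: "k = real f + p" unfolding f_def p_def using assms(2) by (simp add: frac_def)
  define m where "m = (\<lambda>b::bool. min (f + (if b then 1 else 0)) (card N))"
  have inner: "measure_pmf.expectation (pmf_of_set {T. T \<subseteq> N \<and> card T = m b}) (\<lambda>T. (2::real) ^ card T)
       = 2 ^ m b" for b
  proof -
    have fin: "finite {T. T \<subseteq> N \<and> card T = m b}" and ne: "{T. T \<subseteq> N \<and> card T = m b} \<noteq> {}"
      using Sm_props[OF assms(1), of "m b"] by (auto simp: m_def)
    have "(\<Sum>T\<in>{T. T \<subseteq> N \<and> card T = m b}. (2::real) ^ card T)
        = (\<Sum>T\<in>{T. T \<subseteq> N \<and> card T = m b}. 2 ^ m b)" by (rule sum.cong) auto
    also have "\<dots> = real (card {T. T \<subseteq> N \<and> card T = m b}) * 2 ^ m b" by simp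
    finally show ?thesis using fin ne by (simp add: integral_pmf_of_set)
  qed
  have "choose_targets N k = bernoulli_pmf p \<bind> (\<lambda>b. pmf_of_set {T. T \<subseteq> N \<and> card T = m b})"
    unfolding choose_targets_def p_def m_def f_def Let_def by simp
  note eq = this
  have "measure_pmf.expectation (choose_targets N k) (\<lambda>T. (2::real) ^ card T)
     = (\<Sum>b\<in>UNIV. pmf (bernoulli_pmf p) b *\<^sub>R measure_pmf.expectation (pmf_of_set {T. T \<subseteq> N \<and> card T = m b}) (\<lambda>T. (2::real) ^ card T))"
    unfolding eq
    apply (rule pmf_expectation_bind)
    using Sm_props[OF assms(1)] by (auto simp: m_def)
  also have "\<dots> = p * 2 ^ m True + (1 - p) * 2 ^ m False"
    using p01 by (simp add: inner UNIV_bool)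
  also have "\<dots> \<le> p * 2 ^ (f+1) + (1 - p) * 2 ^ f"
  proof -
    have h1: "(2::real) ^ m True \<le> 2 ^ (f+1)" by (rule power_increasing) (auto simp: m_def)
    have h2: "(2::real) ^ m False \<le> 2 ^ f" by (rule power_increasing) (auto simp: m_def)
    have "0 \<le> 1 - p" using p01 by simp
    then show ?thesis using add_mono[OF mult_left_mono[OF h1 p01(1)] mult_left_mono[OF h2]] by simp
  qed
  also have "\<dots> = 2 ^ f * (1 + p)" by (simp add: algebra_simps)
  also have "\<dots> \<le> 4 ^ f * 4 powr p"
  proof (intro mult_mono)
    show "(2::real) ^ f \<le> 4 ^ f" by (intro power_mono) auto
    have "(1::real) = ln (exp 1)" by simp
    also have "\<dots> \<le> ln 4" using exp_le by (subst ln_le_cancel_iff) auto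
    finally have l4: "(1::real) \<le> ln 4" .
    have "1 + p \<le> 1 + p * ln 4"
      using mult_left_mono[OF l4 p01(1)] by simp
    also have "\<dots> \<le> exp (p * ln 4)" by (rule exp_ge_add_one_self)
    also have "\<dots> = 4 powr p" by (simp add: powr_def)
    finally show "1 + p \<le> 4 powr p" .
  qed (use p01 in auto)
  also have "\<dots> = 4 powr k"
  proof -
    have "(4::real) powr k = 4 powr (real f) * 4 powr p" unfolding kf by (rule powr_add)
    moreover have "(4::real) powr real f = 4 ^ f" by (rule powr_realpow) simp
    ultimately show ?thesis by simp
  qed
  finally show ?thesis .
qed

lemma pi_tail:
  fixes A :: "'a set" and N :: "'a \<Rightarrow> 'b set"
  assumes A: "finite A" and N: "\<And>e. e \<in> A \<Longrightarrow> finite (N e)" and k: "0 \<le> k"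
    and cA: "card A \<le> n"
  shows "measure_pmf.prob (Pi_pmf A {} (\<lambda>e. choose_targets (N e) k))
           {T. real (\<Sum>e\<in>A. card (T e)) > 2 * real n * k + s0} \<le> 2 powr (-s0)"
proof -
  define P where "P = Pi_pmf A {} (\<lambda>e. choose_targets (N e) k)"
  define u where "u = (\<lambda>T::'a \<Rightarrow> 'b set. \<Prod>e\<in>A. (2::real) ^ card (T e))"
  have intf: "integrable (measure_pmf (choose_targets (N e) k)) (\<lambda>T. (2::real) ^ card T)" if "e \<in> A" for e
  proof (rule integrable_measure_pmf_finite)
    show "finite (set_pmf (choose_targets (N e) k))"
      using ct_set[OF N[OF that], of k] N[OF that] by (meson finite_Pow_iff finite_subset)
  qed
  have int: "integrable (measure_pmf P) u"
    unfolding P_def u_def by (rule integrable_prod_Pi_pmf[OF A]) (use intf in auto)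
  have "measure_pmf.expectation P u = (\<Prod>e\<in>A. measure_pmf.expectation (choose_targets (N e) k) (\<lambda>T. (2::real) ^ card T))"
    unfolding P_def u_def by (rule expectation_prod_Pi_pmf[OF A]) (use intf in auto)
  also have "\<dots> \<le> (\<Prod>e\<in>A. 4 powr k)"
    by (intro prod_mono conjI integral_nonneg_AE AE_pmfI ct_exp N k) auto
  also have "\<dots> = 4 powr (k * card A)" by (simp add: powr_realpow[symmetric] powr_powr)
  also have "\<dots> \<le> 4 powr (k * n)" using k cA by (intro powr_mono mult_left_mono) auto
  also have "\<dots> = 2 powr (2 * n * k)"
  proof -
    have "(4::real) powr (k * n) = (2 powr 2) powr (k * n)" by simp
    also have "\<dots> = 2 powr (2 * n * k)" by (subst powr_powr) (simp add: mult_ac)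
    finally show ?thesis .
  qed
  finally have E: "measure_pmf.expectation P u \<le> 2 powr (2 * n * k)" .
  have sub: "{T::'a \<Rightarrow> 'b set. real (\<Sum>e\<in>A. card (T e)) > 2 * real n * k + s0} \<subseteq> {x \<in> space (measure_pmf P). u x \<ge> 2 powr (2 * n * k + s0)}"
  proof safe
    fix T :: "'a \<Rightarrow> 'b set" assume "real (\<Sum>e\<in>A. card (T e)) > 2 * real n * k + s0"
    then have "2 powr (2 * n * k + s0) \<le> 2 powr real (\<Sum>e\<in>A. card (T e))" by (intro powr_mono) auto
    also have "\<dots> = u T" unfolding u_def by (subst powr_realpow) (simp, rule power_sum)
    finally show "2 powr (2 * n * k + s0) \<le> u T" .
  qed auto
  have "measure_pmf.prob P {T::'a \<Rightarrow> 'b set. real (\<Sum>e\<in>A. card (T e)) > 2 * real n * k + s0}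
      \<le> measure_pmf.prob P {x \<in> space (measure_pmf P). u x \<ge> 2 powr (2 * n * k + s0)}"
    by (rule measure_pmf.finite_measure_mono[OF sub]) auto
  also have "\<dots> \<le> measure_pmf.expectation P u / 2 powr (2 * n * k + s0)"
    by (rule integral_Markov_inequality_measure[OF int, of "{}"]) (auto simp: u_def intro!: AE_pmfI prod_nonneg)
  also have "\<dots> \<le> 2 powr (2 * n * k) / 2 powr (2 * n * k + s0)"
    by (intro divide_right_mono E) auto
  also have "\<dots> = 2 powr (-s0)" by (simp add: powr_diff[symmetric])
  finally show ?thesis unfolding P_def .
qed

lemma card_filter_sum: "finite A \<Longrightarrow> card {x\<in>A. P x} = (\<Sum>x\<in>A. if P x then 1 else 0)"
proof -
  assume "finite A"
  then have "(\<Sum>x\<in>A. if P x then 1 else (0::nat)) = (\<Sum>x\<in>{x\<in>A. P x}. 1)"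
    by (rule sum.inter_filter[symmetric])
  then show ?thesis by simp
qed

lemma det_bound:
  fixes T :: "'e \<Rightarrow> 's set" and elems :: "'s \<Rightarrow> 'u set"
  assumes S: "finite S" and X: "finite X" and TS: "\<And>e. e \<in> X \<Longrightarrow> T e \<subseteq> S"
    and th: "\<theta> > 0" and m: "\<And>s. s \<in> S \<Longrightarrow> card (elems s) \<le> m"
    and J: "J = {s \<in> S. w s = r \<and> real (card {e \<in> X. s \<in> T e}) \<ge> \<theta>}"
  shows "real (\<Sum>s\<in>J. card (elems s)) \<le> real m * real (\<Sum>e\<in>X. card (T e)) / \<theta>"
proof -
  have JS: "J \<subseteq> S" using J by auto
  have finJ: "finite J" using JS S finite_subset by blast
  have "\<theta> * real (card J) = (\<Sum>s\<in>J. \<theta>)" by simp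
  also have "\<dots> \<le> (\<Sum>s\<in>J. real (card {e \<in> X. s \<in> T e}))"
    by (rule sum_mono) (use J in auto)
  also have "\<dots> = real (\<Sum>s\<in>J. (\<Sum>e\<in>X. if s \<in> T e then 1 else 0))"
    by (simp only: card_filter_sum[OF X] of_nat_sum)
  also have "(\<Sum>s\<in>J. (\<Sum>e\<in>X. if s \<in> T e then 1 else 0)) = (\<Sum>e\<in>X. (\<Sum>s\<in>J. if s \<in> T e then 1 else (0::nat)))"
    by (rule sum.swap)
  also have "\<dots> = (\<Sum>e\<in>X. card {s \<in> J. s \<in> T e})"
    by (simp only: card_filter_sum[OF finJ])
  also have "\<dots> \<le> (\<Sum>e\<in>X. card (T e))"
  proof (rule sum_mono)
    fix e assume "e \<in> X"
    then have "finite (T e)" using TS S finite_subset by blast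
    then show "card {s \<in> J. s \<in> T e} \<le> card (T e)" by (intro card_mono) auto
  qed
  finally have cJ: "\<theta> * real (card J) \<le> real (\<Sum>e\<in>X. card (T e))" by simp
  have "real (\<Sum>s\<in>J. card (elems s)) \<le> real (\<Sum>s\<in>J. m)"
    using JS m by (intro of_nat_mono sum_mono) auto
  also have "\<dots> = real m * real (card J)" by simp
  also have "\<dots> = real m * (\<theta> * real (card J)) / \<theta>" using th by simp
  also have "\<dots> \<le> real m * real (\<Sum>e\<in>X. card (T e)) / \<theta>"
    using th cJ by (intro divide_right_mono mult_left_mono) auto
  finally show ?thesis .
qed

lemma nbrs_finite: "finite S \<Longrightarrow> finite (nbrs S elems e)"
  unfolding nbrs_def by auto

lemma round_bad:
  fixes S :: "'s set" and elems :: "'s \<Rightarrow> 'e set" and U :: "'e set"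
  assumes S: "finite S" and U: "finite U" and cpos: "c > 0" and lpos: "log 2 (real (card U)) > 0"
    and m: "\<And>s. s \<in> S \<Longrightarrow> card (elems s) \<le> m"
    and k: "k = msg_count c (card U) (maxdeg S elems U) i" and k0: "0 \<le> k"
  shows "measure_pmf.prob (round_step S elems U c i w r st)
     {y. real (snd y) > real (snd st) + ((2 * real (card U) * k + tz)
          + real m * (2 * real (card U) * k + tz) / (c * 4 * log 2 (real (card U))))} \<le> 2 powr (-tz)"
proof -
  define n where "n = card U"
  define \<theta> where "\<theta> = c * 4 * log 2 (real n)"
  define X where "X = U - fst st"
  define M0 where "M0 = 2 * real n * k + tz"
  define P where "P = Pi_pmf X {} (\<lambda>e. choose_targets (nbrs S elems e) k)"
  define g where "g = (\<lambda>T. let J = {s \<in> S. w s = r \<and>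
                         real (card {e \<in> X. s \<in> T e}) \<ge> c * 4 * log 2 (real n)}
             in (fst st \<union> \<Union>(elems ` J),
                            snd st + (\<Sum>e\<in>X. card (T e)) + (\<Sum>s\<in>J. card (elems s))))"
  define Bad where "Bad = {y::'e set \<times> nat. real (snd y) > real (snd st) + (M0 + real m * M0 / \<theta>)}"
  have th: "\<theta> > 0" unfolding \<theta>_def n_def using cpos lpos by simp
  have X: "finite X" "card X \<le> n" unfolding X_def n_def using U by (auto intro: card_mono)
  have rs: "round_step S elems U c i w r st = map_pmf g P"
    unfolding round_step_def map_pmf_def g_def P_def X_def n_def k Let_def by simp
  have key: "g T \<notin> Bad" if T: "T \<in> set_pmf P" and MT: "real (\<Sum>e\<in>X. card (T e)) \<le> M0" for T
  proof -
    have TS: "T e \<subseteq> S" if "e \<in> X" for e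
    proof -
      have "T e \<in> set_pmf (choose_targets (nbrs S elems e) k)"
        using T that X unfolding P_def by (auto simp: set_Pi_pmf PiE_dflt_def)
      moreover have "set_pmf (choose_targets (nbrs S elems e) k) \<subseteq> Pow (nbrs S elems e)"
        by (rule ct_set[OF nbrs_finite[OF S]])
      ultimately have "T e \<in> Pow (nbrs S elems e)" by (rule rev_subsetD)
      moreover have "nbrs S elems e \<subseteq> S" unfolding nbrs_def by (rule Collect_restrict)
      ultimately show ?thesis by (meson PowD order_trans)
    qed
    define J where "J = {s \<in> S. w s = r \<and> real (card {e \<in> X. s \<in> T e}) \<ge> \<theta>}"
    have gT: "snd (g T) = snd st + (\<Sum>e\<in>X. card (T e)) + (\<Sum>s\<in>J. card (elems s))"
      unfolding g_def J_def \<theta>_def Let_def by simp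
    have "real (\<Sum>s\<in>J. card (elems s)) \<le> real m * real (\<Sum>e\<in>X. card (T e)) / \<theta>"
      by (rule det_bound[OF S X(1) TS th m J_def])
    also have "\<dots> \<le> real m * M0 / \<theta>"
      using MT th by (intro divide_right_mono mult_left_mono) auto
    finally have "real (snd (g T)) \<le> real (snd st) + (M0 + real m * M0 / \<theta>)"
      using MT unfolding gT by simp
    then show ?thesis unfolding Bad_def by simp
  qed
  have "measure_pmf.prob (round_step S elems U c i w r st) Bad = measure_pmf.prob P (g -` Bad)"
    unfolding rs by (rule measure_map_pmf)
  also have "\<dots> = measure_pmf.prob P (g -` Bad \<inter> set_pmf P)"
    by (rule measure_Int_set_pmf[symmetric])
  also have "\<dots> \<le> measure_pmf.prob P {T. real (\<Sum>e\<in>X. card (T e)) > 2 * real n * k + tz}"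
  proof (rule measure_pmf.finite_measure_mono)
    show "g -` Bad \<inter> set_pmf P \<subseteq> {T. real (\<Sum>e\<in>X. card (T e)) > 2 * real n * k + tz}"
    proof (rule subsetI)
      fix T assume T: "T \<in> g -` Bad \<inter> set_pmf P"
      show "T \<in> {T. real (\<Sum>e\<in>X. card (T e)) > 2 * real n * k + tz}"
      proof (rule CollectI, rule ccontr)
        assume "\<not> real (\<Sum>e\<in>X. card (T e)) > 2 * real n * k + tz"
        then have "real (\<Sum>e\<in>X. card (T e)) \<le> M0" unfolding M0_def by (simp only: not_less)
        with T key show False by blast
      qed
    qed
  qed simp
  also have "\<dots> \<le> 2 powr (-tz)"
    unfolding P_def by (rule pi_tail[OF X(1) nbrs_finite[OF S] k0 X(2)])
  finally show ?thesis unfolding Bad_def M0_def \<theta>_def n_def .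
qed

lemma iter_bad:
  fixes f :: "nat \<Rightarrow> 'a \<times> nat \<Rightarrow> ('a \<times> nat) pmf"
  assumes H: "\<And>r z. r < k \<Longrightarrow> measure_pmf.prob (f r z) {y. real (snd y) > real (snd z) + b} \<le> \<epsilon>"
  shows "measure_pmf.prob (iterate_pmf k f x) {y. real (snd y) > real (snd x) + real k * b} \<le> real k * \<epsilon>"
  using H
proof (induction k)
  case 0
  then show ?case by simp
next
  case (Suc k)
  have IH: "measure_pmf.prob (iterate_pmf k f x) {y. real (snd y) > real (snd x) + real k * b} \<le> real k * \<epsilon>"
    using Suc by auto
  have eps: "0 \<le> \<epsilon>" using Suc.prems[of k x] measure_nonneg[of "measure_pmf (f k x)"] by (meson lessI order_trans)
  define Bk where "Bk = {y::'a \<times> nat. real (snd y) > real (snd x) + real k * b}"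
  define B' where "B' = {y::'a \<times> nat. real (snd y) > real (snd x) + real (Suc k) * b}"
  have pw: "emeasure (measure_pmf (f k z)) B' \<le> indicator Bk z + ennreal \<epsilon>" for z
  proof (cases "z \<in> Bk")
    case True
    have "emeasure (measure_pmf (f k z)) B' \<le> 1" by (simp add: measure_pmf.emeasure_le_1)
    also have "\<dots> \<le> indicator Bk z + ennreal \<epsilon>" using True by simp
    finally show ?thesis .
  next
    case False
    have "B' \<subseteq> {y. real (snd y) > real (snd z) + b}"
      using False unfolding Bk_def B'_def by (auto simp: algebra_simps)
    then have "emeasure (measure_pmf (f k z)) B' \<le> emeasure (measure_pmf (f k z)) {y. real (snd y) > real (snd z) + b}"
      by (rule emeasure_mono) auto
    also have "\<dots> = ennreal (measure_pmf.prob (f k z) {y. real (snd y) > real (snd z) + b})"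
      by (rule measure_pmf.emeasure_eq_measure)
    also have "\<dots> \<le> ennreal \<epsilon>" using Suc.prems[of k z] by (intro ennreal_leI) auto
    finally show ?thesis using False by simp
  qed
  have "emeasure (measure_pmf (iterate_pmf (Suc k) f x)) B'
      = (\<integral>\<^sup>+z. emeasure (measure_pmf (f k z)) B' \<partial>measure_pmf (iterate_pmf k f x))"
    by simp
  also have "\<dots> \<le> (\<integral>\<^sup>+z. (indicator Bk z + ennreal \<epsilon>) \<partial>measure_pmf (iterate_pmf k f x))"
    by (rule nn_integral_mono) (rule pw)
  also have "\<dots> = emeasure (measure_pmf (iterate_pmf k f x)) Bk + ennreal \<epsilon>"
    by (subst nn_integral_add) (auto simp: measure_pmf.emeasure_space_1)
  also have "\<dots> = ennreal (measure_pmf.prob (iterate_pmf k f x) Bk + \<epsilon>)"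
    using eps by (simp add: measure_pmf.emeasure_eq_measure ennreal_plus)
  also have "\<dots> \<le> ennreal (real k * \<epsilon> + \<epsilon>)"
    using IH unfolding Bk_def by (intro ennreal_leI) auto
  finally have "ennreal (measure_pmf.prob (iterate_pmf (Suc k) f x) B') \<le> ennreal (real k * \<epsilon> + \<epsilon>)"
    by (simp only: measure_pmf.emeasure_eq_measure)
  then have "measure_pmf.prob (iterate_pmf (Suc k) f x) B' \<le> real k * \<epsilon> + \<epsilon>"
    using eps by (subst (asm) ennreal_le_iff) auto
  then show ?case unfolding B'_def by (simp add: algebra_simps)
qed

lemma phase_bad:
  fixes S :: "'s set" and elems :: "'s \<Rightarrow> 'e set" and U :: "'e set"
  assumes H: "\<And>w r z. measure_pmf.prob (round_step S elems U c i w r z) {y. real (snd y) > real (snd z) + b} \<le> \<epsilon>"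
  shows "measure_pmf.prob (phase_step S elems U c i x)
           {y. real (snd y) > real (snd x) + real (Suc (phase_len (maxdeg S elems U))) * b}
         \<le> real (Suc (phase_len (maxdeg S elems U))) * \<epsilon>"
proof -
  define L where "L = phase_len (maxdeg S elems U)"
  define B where "B = {y::'e set \<times> nat. real (snd y) > real (snd x) + real (Suc L) * b}"
  have eps: "0 \<le> \<epsilon>" using H[of undefined 0 x] by (meson measure_nonneg order_trans)
  have pw: "emeasure (measure_pmf (iterate_pmf (Suc L) (\<lambda>r. round_step S elems U c i (\<lambda>s. L - X s) r) x)) B
            \<le> ennreal (real (Suc L) * \<epsilon>)" for X
  proof -
    have "measure_pmf.prob (iterate_pmf (Suc L) (\<lambda>r. round_step S elems U c i (\<lambda>s. L - X s) r) x) B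
          \<le> real (Suc L) * \<epsilon>"
      unfolding B_def by (rule iter_bad) (rule H)
    then show ?thesis by (simp add: measure_pmf.emeasure_eq_measure ennreal_leI)
  qed
  have "emeasure (measure_pmf (phase_step S elems U c i x)) B
     = (\<integral>\<^sup>+X. emeasure (measure_pmf (iterate_pmf (Suc L) (\<lambda>r. round_step S elems U c i (\<lambda>s. L - X s) r) x)) B
          \<partial>measure_pmf (Pi_pmf S 0 (\<lambda>_. capped_geom L)))"
    unfolding phase_step_def L_def Let_def by simp
  also have "\<dots> \<le> (\<integral>\<^sup>+X. ennreal (real (Suc L) * \<epsilon>) \<partial>measure_pmf (Pi_pmf S 0 (\<lambda>_. capped_geom L)))"
    by (rule nn_integral_mono) (rule pw)
  also have "\<dots> = ennreal (real (Suc L) * \<epsilon>)" by (simp add: measure_pmf.emeasure_space_1)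
  finally have "ennreal (measure_pmf.prob (phase_step S elems U c i x) B) \<le> ennreal (real (Suc L) * \<epsilon>)"
    by (simp only: measure_pmf.emeasure_eq_measure)
  then have "measure_pmf.prob (phase_step S elems U c i x) B \<le> real (Suc L) * \<epsilon>"
    using eps by (subst (asm) ennreal_le_iff) auto
  then show ?thesis unfolding B_def L_def .
qed

lemma maxdeg_facts:
  fixes S :: "'s set" and elems :: "'s \<Rightarrow> 'e set" and U :: "'e set"
  assumes S: "finite S" and U: "finite U" and cov: "\<Union>(elems ` S) = U" and ne: "U \<noteq> {}"
  shows "\<And>s. s \<in> S \<Longrightarrow> card (elems s) \<le> maxdeg S elems U" "maxdeg S elems U \<ge> 1"
proof -
  define F where "F = (\<lambda>s. card (elems s)) ` S \<union> (\<lambda>e. card (nbrs S elems e)) ` U"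
  have F: "finite F" unfolding F_def using S U by auto
  show "card (elems s) \<le> maxdeg S elems U" if "s \<in> S" for s
    unfolding maxdeg_def using that F by (intro Max_ge) (auto simp: F_def)
  obtain e where e: "e \<in> U" using ne by auto
  then obtain s where "s \<in> S" "e \<in> elems s" using cov by auto
  then have "nbrs S elems e \<noteq> {}" unfolding nbrs_def by auto
  moreover have "finite (nbrs S elems e)" using nbrs_finite[OF S] .
  ultimately have "card (nbrs S elems e) \<noteq> 0" by simp
  then have "card (nbrs S elems e) \<ge> 1" by linarith
  also have "card (nbrs S elems e) \<le> maxdeg S elems U"
    unfolding maxdeg_def using e F by (intro Max_ge) (auto simp: F_def)
  finally show "maxdeg S elems U \<ge> 1" .
qed

lemma log_le_self_nat: "log 2 (real (R::nat)) \<le> real R"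
proof (cases "R = 0")
  case False
  have "R < 2 ^ R" by (rule less_exp)
  then have "real R < 2 ^ R" by (metis of_nat_less_iff of_nat_numeral of_nat_power)
  then have "log 2 (real R) < log 2 (2 ^ R)" using False by (subst log_less_cancel_iff) auto
  then show ?thesis by (simp add: log_nat_power)
qed (simp add: log_def)

theorem mainTheorem8:
  fixes c :: real
  assumes "c > 0"
  shows "\<exists>C0 K N0. \<forall>(S :: 's set) (elems :: 's \<Rightarrow> 'e set) (U :: 'e set).
           finite S \<and> finite U \<and> (\<forall>s\<in>S. elems s \<subseteq> U) \<and> \<Union>(elems ` S) = U \<and>
           card U \<ge> N0 \<longrightarrow>
           measure_pmf.prob (run_until_half S elems U c)
             {st. real (snd st) \<le> C0 * real (card U) * sqrt (real (maxdeg S elems U)) *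
                    (1 + log 2 (real (card U)) + log 2 (real (maxdeg S elems U))) ^ K}
           \<ge> 1 - real (card U) powr (- c)"
proof -
  define C1 where "C1 = 16 * c + (c + 4) + 4 + (c + 4) / (4 * c)"
  have cpos: "c > 0" by fact
  show ?thesis
  proof (rule exI[of _ "4 * C1"], rule exI[of _ "4::nat"], rule exI[of _ "2::nat"], intro allI impI, elim conjE)
    fix S :: "'s set" and elems :: "'s \<Rightarrow> 'e set" and U :: "'e set"
    assume S: "finite S" and U: "finite U" and sub: "\<forall>s\<in>S. elems s \<subseteq> U"
      and cov: "\<Union>(elems ` S) = U" and n2: "2 \<le> card U"
    define n where "n = card U"
    define D where "D = maxdeg S elems U"
    define l where "l = log 2 (real n)"
    define lD where "lD = log 2 (real D)"
    define \<Lambda> where "\<Lambda> = 1 + l + lD"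
    define p where "p = nat \<lfloor>log 2 (real D) / 2\<rfloor>"
    define L where "L = phase_len D"
    define R where "R = Suc p * Suc L"
    define s0 where "s0 = c * l + log 2 (real R)"
    define \<epsilon> where "\<epsilon> = (2::real) powr (- s0)"
    define B where "B = 16 * c * real n * l + s0 + 4 * real n * sqrt (real D) + real n * s0 / (4 * c)"
    have Une: "U \<noteq> {}" using n2 by auto
    have m: "\<And>s. s \<in> S \<Longrightarrow> card (elems s) \<le> min D n"
      using maxdeg_facts(1)[OF S U cov Une] sub U unfolding D_def n_def by (auto intro: card_mono)
    have D1: "D \<ge> 1" using maxdeg_facts(2)[OF S U cov Une] unfolding D_def .
    have l1: "l \<ge> 1" unfolding l_def n_def using n2 by simp
    have lD0: "lD \<ge> 0" unfolding lD_def using D1 by simp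
    have R1: "R \<ge> 1" unfolding R_def by simp
    have s00: "s0 \<ge> 0" unfolding s0_def using cpos l1 R1 by simp
    have sqD1: "1 \<le> sqrt (real D)" using D1 by simp
    have "sqrt (real D) \<le> sqrt (real D * real D)" using D1 by (intro real_sqrt_le_mono) simp
    then have sqD2: "sqrt (real D) \<le> real D" by simp
    note sqD = sqD1 sqD2
    have round: "measure_pmf.prob (round_step S elems U c i w r z) {y. real (snd y) > real (snd z) + B} \<le> \<epsilon>"
      if i: "i \<le> p" for i w r z
    proof -
      define k where "k = msg_count c n D i"
      have k0: "0 \<le> k" unfolding k_def msg_count_def using cpos l1 l_def by simp
      have ri: "real i \<le> lD / 2"
      proof -
        have "real i \<le> real p" using i by simp
        also have "\<dots> \<le> lD / 2" unfolding p_def lD_def using lD0 lD_def by linarith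
        finally show ?thesis .
      qed
      have pow: "(2::real) ^ i \<le> sqrt (real D)"
      proof -
        have "(2::real) ^ i = 2 powr real i" by (simp add: powr_realpow)
        also have "\<dots> \<le> 2 powr (lD / 2)" using ri by (intro powr_mono) auto
        also have "\<dots> = (2 powr lD) powr (1/2)" by (simp add: powr_powr)
        also have "\<dots> = sqrt (real D)" unfolding lD_def using D1 by (simp add: powr_half_sqrt)
        finally show ?thesis .
      qed
      have "(2::real) ^ i \<le> real D" using pow sqD2 by linarith
      then have "(2::real) ^ i / real D \<le> real D / real D" by (rule divide_right_mono) auto
      also have "\<dots> = 1" using D1 by simp
      finally have powD: "(2::real) ^ i / real D \<le> 1" .
      have kk: "2 * real n * k = 16 * c * real n * l * (2 ^ i / real D)"
        unfolding k_def msg_count_def l_def by simp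
      have kb: "2 * real n * k \<le> 16 * c * real n * l"
        unfolding kk by (rule mult_left_le[OF powD]) (use cpos l1 in simp)
      have kb2: "real (min D n) * (2 * real n * k) / (c * 4 * l) \<le> 4 * real n * sqrt (real D)"
      proof -
        have "real (min D n) * (2 * real n * k) / (c * 4 * l) = 4 * real n * 2 ^ i * (real (min D n) / real D)"
          unfolding kk using cpos l1 D1 by (simp add: field_simps)
        also have "\<dots> \<le> 4 * real n * 2 ^ i * 1"
          using D1 by (intro mult_left_mono) auto
        also have "\<dots> \<le> 4 * real n * sqrt (real D)" using pow by (simp add: mult_left_mono)
        finally show ?thesis .
      qed
      have sb: "real (min D n) * s0 / (c * 4 * l) \<le> real n * s0 / (4 * c)"
      proof -
        have "real (min D n) * s0 / (c * 4 * l) \<le> real n * s0 / (c * 4 * l)"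
          using cpos l1 s00 by (intro divide_right_mono mult_right_mono) auto
        also have "\<dots> \<le> real n * s0 / (4 * c)"
          using cpos l1 s00 by (intro divide_left_mono) (auto simp: mult_ac)
        finally show ?thesis .
      qed
      have "(2 * real n * k + s0) + real (min D n) * (2 * real n * k + s0) / (c * 4 * l) \<le> B"
      proof -
        have "real (min D n) * (2 * real n * k + s0) / (c * 4 * l) = real (min D n) * (2 * real n * k) / (c * 4 * l) + real (min D n) * s0 / (c * 4 * l)"
          by (simp only: distrib_left add_divide_distrib)
        then show ?thesis using kb kb2 sb unfolding B_def by linarith
      qed
      then have "{y. real (snd y) > real (snd z) + B} \<subseteq>
         {y. real (snd y) > real (snd z) + ((2 * real n * k + s0) + real (min D n) * (2 * real n * k + s0) / (c * 4 * l))}"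
        by auto
      then have "measure_pmf.prob (round_step S elems U c i w r z) {y. real (snd y) > real (snd z) + B}
        \<le> measure_pmf.prob (round_step S elems U c i w r z) {y. real (snd y) > real (snd z) + ((2 * real n * k + s0) + real (min D n) * (2 * real n * k + s0) / (c * 4 * l))}"
        by (intro measure_pmf.finite_measure_mono) auto
      also have "\<dots> \<le> \<epsilon>"
      proof -
        have lp: "log 2 (real (card U)) > 0" using l1 unfolding l_def n_def by simp
        have kk': "k = msg_count c (card U) (maxdeg S elems U) i" unfolding k_def n_def D_def ..
        show ?thesis
          using round_bad[OF S U cpos lp m kk' k0, where tz=s0 and w=w and r=r and st=z] unfolding \<epsilon>_def l_def n_def .
      qed
      finally show ?thesis .
    qed
    have phase: "measure_pmf.prob (phase_step S elems U c i x) {y. real (snd y) > real (snd x) + real (Suc L) * B}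
         \<le> real (Suc L) * \<epsilon>" if "i < Suc p" for i x
    proof -
      have "i \<le> p" using that by simp
      then show ?thesis unfolding L_def D_def by (intro phase_bad round)
    qed
    have run: "measure_pmf.prob (run_until_half S elems U c) {y. real (snd y) > real (snd ({}::'e set, 0::nat)) + real (Suc p) * (real (Suc L) * B)}
         \<le> real (Suc p) * (real (Suc L) * \<epsilon>)"
      unfolding run_until_half_def p_def[symmetric] D_def[symmetric]
      by (rule iter_bad) (rule phase)
    have Reps: "real (Suc p) * (real (Suc L) * \<epsilon>) = real n powr (- c)"
    proof -
      have Rpos: "real R > 0" using R1 by simp
      have npos: "real n > 0" using n2 unfolding n_def by simp
      have e1: "\<epsilon> = 2 powr (- (c * l)) / 2 powr (log 2 (real R))"
        unfolding \<epsilon>_def s0_def by (simp add: powr_diff[symmetric])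
      have e2: "(2::real) powr (log 2 (real R)) = real R" using Rpos by simp
      have "(2::real) powr (- (c * l)) = (2 powr l) powr (- c)" by (simp add: powr_powr mult.commute)
      also have "\<dots> = real n powr (- c)" unfolding l_def using npos by simp
      finally have e3: "(2::real) powr (- (c * l)) = real n powr (- c)" .
      have "real (Suc p) * (real (Suc L) * \<epsilon>) = real R * \<epsilon>" unfolding R_def of_nat_mult by (simp only: mult.assoc)
      also have "\<dots> = real n powr (- c)" unfolding e1 e2 e3 using Rpos by simp
      finally show ?thesis .
    qed
    have RB: "real (Suc p) * (real (Suc L) * B) \<le> 4 * C1 * real n * sqrt (real D) * \<Lambda> ^ 4"
    proof -
      have L1: "\<Lambda> \<ge> 1" unfolding \<Lambda>_def using l1 lD0 by simp
      have LL: "\<Lambda> \<le> \<Lambda>\<^sup>2" using L1 by (simp add: power2_eq_square)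
      have hp: "real (Suc p) \<le> \<Lambda>"
      proof -
        have "real p \<le> lD / 2" unfolding p_def lD_def using lD0 lD_def by linarith
        then show ?thesis unfolding \<Lambda>_def using l1 lD0 by simp
      qed
      have hL: "real (Suc L) \<le> 4 * \<Lambda>"
      proof -
        have "real L \<le> 4 * lD + 1" unfolding L_def phase_len_def lD_def using lD0 lD_def by linarith
        then show ?thesis unfolding \<Lambda>_def using l1 lD0 by simp
      qed
      have hR: "real R \<le> 4 * \<Lambda>\<^sup>2"
      proof -
        have "real R = real (Suc p) * real (Suc L)" unfolding R_def by (rule of_nat_mult)
        also have "\<dots> \<le> \<Lambda> * (4 * \<Lambda>)" using hp hL by (intro mult_mono) auto
        finally show ?thesis by (simp add: power2_eq_square)
      qed
      have hs0: "s0 \<le> (c + 4) * \<Lambda>\<^sup>2"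
      proof -
        have "log 2 (real R) \<le> real R" by (rule log_le_self_nat)
        then have "s0 \<le> c * l + 4 * \<Lambda>\<^sup>2" unfolding s0_def using hR by linarith
        moreover have "c * l \<le> c * \<Lambda>\<^sup>2" using cpos LL l1 lD0 unfolding \<Lambda>_def by (intro mult_left_mono) auto
        ultimately show ?thesis by (simp add: algebra_simps)
      qed
      define W where "W = real n * sqrt (real D) * \<Lambda>\<^sup>2"
      have n1: "real n \<ge> 1" using n2 unfolding n_def by simp
      have nsq: "1 \<le> real n * sqrt (real D)" using mult_mono[OF n1 sqD1] by simp
      have W1: "\<Lambda>\<^sup>2 \<le> W" unfolding W_def using mult_right_mono[OF nsq zero_le_power2[of \<Lambda>]] by simp
      have "real n * 1 \<le> real n * sqrt (real D)" using sqD1 by (intro mult_left_mono) auto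
      then have Wn: "real n * \<Lambda>\<^sup>2 \<le> W" unfolding W_def using mult_right_mono[OF _ zero_le_power2[of \<Lambda>]] by simp
      have t1: "16 * c * real n * l \<le> 16 * c * W"
      proof -
        have "real n * l \<le> real n * \<Lambda>\<^sup>2" using LL l1 lD0 unfolding \<Lambda>_def by (intro mult_left_mono) auto
        then have "real n * l \<le> W" using Wn by linarith
        then show ?thesis using cpos by (simp add: mult.assoc)
      qed
      have t2: "s0 \<le> (c + 4) * W"
      proof -
        have "(c + 4) * \<Lambda>\<^sup>2 \<le> (c + 4) * W" using W1 cpos by (intro mult_left_mono) auto
        then show ?thesis using hs0 by linarith
      qed
      have t3: "4 * real n * sqrt (real D) \<le> 4 * W"
      proof -
        have "real n * sqrt (real D) * 1 \<le> real n * sqrt (real D) * \<Lambda>\<^sup>2"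
        proof (rule mult_left_mono)
          show "1 \<le> \<Lambda>\<^sup>2" using L1 LL by linarith
        qed (use n1 sqD1 in simp)
        then show ?thesis unfolding W_def by simp
      qed
      have t4: "real n * s0 / (4 * c) \<le> (c + 4) / (4 * c) * W"
      proof -
        have "real n * s0 \<le> real n * ((c + 4) * \<Lambda>\<^sup>2)" using hs0 n1 by (intro mult_left_mono) auto
        also have "\<dots> = (c + 4) * (real n * \<Lambda>\<^sup>2)" by simp
        also have "\<dots> \<le> (c + 4) * W" using Wn cpos by (intro mult_left_mono) auto
        finally have "real n * s0 \<le> (c + 4) * W" .
        then have "real n * s0 / (4 * c) \<le> (c + 4) * W / (4 * c)" using cpos by (intro divide_right_mono) auto
        then show ?thesis by simp
      qed
      have BW: "B \<le> C1 * W"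
        unfolding B_def C1_def using t1 t2 t3 t4 by (simp add: algebra_simps)
      have B0: "0 \<le> B" unfolding B_def using cpos s00 l1 by simp
      have "real (Suc p) * (real (Suc L) * B) = real R * B" unfolding R_def of_nat_mult by (simp only: mult.assoc)
      also have "\<dots> \<le> (4 * \<Lambda>\<^sup>2) * (C1 * W)" using hR BW B0 by (intro mult_mono) auto
      also have "\<dots> = 4 * C1 * real n * sqrt (real D) * \<Lambda> ^ 4" unfolding W_def by (simp add: power2_eq_square power4_eq_xxxx)
      finally show ?thesis .
    qed
    define Bad where "Bad = {y::'e set \<times> nat. real (snd y) > real (Suc p) * (real (Suc L) * B)}"
    have runB: "measure_pmf.prob (run_until_half S elems U c) Bad \<le> real n powr (- c)"
    proof -
      have "Bad = {y. real (snd y) > real (snd ({}::'e set, 0::nat)) + real (Suc p) * (real (Suc L) * B)}"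
        unfolding Bad_def by simp
      then show ?thesis using run Reps by simp
    qed
    have "measure_pmf.prob (run_until_half S elems U c)
             {st. real (snd st) \<le> 4 * C1 * real n * sqrt (real D) * \<Lambda> ^ 4}
        \<ge> measure_pmf.prob (run_until_half S elems U c) (UNIV - Bad)"
      using RB unfolding Bad_def by (intro measure_pmf.finite_measure_mono) auto
    moreover have "measure_pmf.prob (run_until_half S elems U c) (UNIV - Bad)
        = 1 - measure_pmf.prob (run_until_half S elems U c) Bad"
      using measure_pmf.prob_compl[of Bad] by simp
    ultimately have fin: "measure_pmf.prob (run_until_half S elems U c)
             {st. real (snd st) \<le> 4 * C1 * real n * sqrt (real D) * \<Lambda> ^ 4} \<ge> 1 - real n powr (- c)"
      using runB by linarith
    have eqs: "card U = n" "maxdeg S elems U = D" "1 + log 2 (real n) + log 2 (real D) = \<Lambda>"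
      unfolding n_def D_def \<Lambda>_def l_def lD_def by simp_all
    show "measure_pmf.prob (run_until_half S elems U c)
             {st. real (snd st) \<le> 4 * C1 * real (card U) * sqrt (real (maxdeg S elems U)) *
                    (1 + log 2 (real (card U)) + log 2 (real (maxdeg S elems U))) ^ 4}
           \<ge> 1 - real (card U) powr (- c)"
      unfolding eqs by (rule fin)
  qed
qed

end
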